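(* Let $\mathcal M$ be a valid catalytic machine with work space $s=s(n)$ and catalytic space $c=c(n)$, where $\log n\le s\le c\le 2^s$, and fix an input $x$. Then $$\mathbb E_{\tau\in\{0,1\}^c}\big[|V(\mathcal G^0_{\mathcal M,x}(\mathrm{acc}_\tau))|\big]\le 2^s\quad\text{and}\quad \mathbb E_{\tau\in\{0,1\}^c}\big[|V(\mathcal G^0_{\mathcal M,x}(\mathrm{rej}_\tau))|\big]\le 2^s,$$ where $\tau$ is uniform.
   Context: A catalytic machine has a read-only input tape holding $x$, a work tape of length $s$ initialized to $0^s$, a catalytic tape of length $c$ initialized to arbitrary $\tau$; non-deterministic/randomized machines have at each step a 0-choice and a 1-choice of transition (deterministic transitions count as both). It is valid if for every $x,\tau$ and every sequence of choices it halts in finite time with catalytic tape $\tau$. Convention: all auxiliary configuration information (internal state, head positions) is recorded on the work tape, so every configuration is a pair $\langle\pi,u\rangle$ with catalytic tape content $\pi\in\{0,1\}^c$ and work tape content $u\in\{0,1\}^s$; the start configuration is $\langle\tau,0^s\rangle$, the unique accepting halt configuration is $\mathrm{acc}_\tau=\langle\tau,1\,1\,0^{s-2}\rangle$ and the unique rejecting halt configuration is $\mathrm{rej}_\tau=\langle\tau,1\,0\,0^{s-2}\rangle$. The configuration graph $\mathcal G_{\mathcal M,x}$ has all configurations as vertices and a directed edge from $v$ to $v'$ when $v'$ is reached from $v$ in one step, labeled by the choice bit(s) ($b$ for a $b$-choice, both 0 and 1 for deterministic steps). The $0$-graph $\mathcal G^0_{\mathcal M,x}$ is the undirected graph keeping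 only edges labeled $0$ and forgetting directions; $\mathcal G^0_{\mathcal M,x}(v)$ denotes the connected component of $v$ in it. *)

theory Defs
  imports Complex_Main
begin

text \<open>A catalytic machine is modelled, per input x, by its one-step transition
  function: M x b v is the configuration reached from v using the b-choice
  (deterministic steps have M x False v = M x True v).  All auxiliary
  information (state, head positions) lives on the work tape.\<close>

type_synonym config = "bool list \<times> bool list"
type_synonym machine = "bool list \<Rightarrow> bool \<Rightarrow> config \<Rightarrow> config"

definition acc_work :: "nat \<Rightarrow> bool list" where
  "acc_work s = [True, True] @ replicate (s - 2) False"

definition rej_work :: "nat \<Rightarrow> bool list" where
  "rej_work s = [True, False] @ replicate (s - 2) False"

definition acc_conf :: "nat \<Rightarrow> bool list \<Rightarrow> config" where
  "acc_conf s \<tau> = (\<tau>, acc_work s)"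

definition rej_conf :: "nat \<Rightarrow> bool list \<Rightarrow> config" where
  "rej_conf s \<tau> = (\<tau>, rej_work s)"

definition halted :: "nat \<Rightarrow> config \<Rightarrow> bool" where
  "halted s v \<longleftrightarrow> snd v = acc_work s \<or> snd v = rej_work s"

definition configs :: "nat \<Rightarrow> nat \<Rightarrow> config set" where
  "configs c s = {v. length (fst v) = c \<and> length (snd v) = s}"

text \<open>Run of the machine on input x from catalytic tape tau under the
  choice sequence ch (a halted configuration stays put).\<close>
fun run :: "machine \<Rightarrow> nat \<Rightarrow> bool list \<Rightarrow> bool list \<Rightarrow> (nat \<Rightarrow> bool) \<Rightarrow> nat \<Rightarrow> config" where
  "run M s x \<tau> ch 0 = (\<tau>, replicate s False)"
| "run M s x \<tau> ch (Suc k) =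
     (let v = run M s x \<tau> ch k in if halted s v then v else M x (ch k) v)"

definition valid_catalytic :: "machine \<Rightarrow> (nat \<Rightarrow> nat) \<Rightarrow> (nat \<Rightarrow> nat) \<Rightarrow> bool" where
  "valid_catalytic M s c \<longleftrightarrow>
     (\<forall>x b v. v \<in> configs (c (length x)) (s (length x)) \<longrightarrow>
          M x b v \<in> configs (c (length x)) (s (length x))) \<and>
     (\<forall>x \<tau> ch. length \<tau> = c (length x) \<longrightarrow>
        (\<exists>k. halted (s (length x)) (run M (s (length x)) x \<tau> ch k)
             \<and> fst (run M (s (length x)) x \<tau> ch k) = \<tau>))"

definition edges0 :: "machine \<Rightarrow> nat \<Rightarrow> nat \<Rightarrow> bool list \<Rightarrow> (config \<times> config) set" where
  "edges0 M c s x = {(v, w). v \<in> configs c s \<and> \<not> halted s v \<and> w = M x False v}"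

definition comp0 :: "machine \<Rightarrow> nat \<Rightarrow> nat \<Rightarrow> bool list \<Rightarrow> config \<Rightarrow> config set" where
  "comp0 M c s x v = {w. (v, w) \<in> (edges0 M c s x \<union> (edges0 M c s x)\<inverse>)\<^sup>*}"

end

theory Submission
  imports Defs
begin

lemma blist_card: "card {xs :: bool list. length xs = n} = 2 ^ n"
  and blist_fin: "finite {xs :: bool list. length xs = n}"
  using card_lists_length_eq[of "UNIV :: bool set" n] finite_lists_length_eq[of "UNIV :: bool set" n]
  by auto

lemma configs_eq: "configs C S = {xs. length xs = C} \<times> {ys. length ys = S}"
  unfolding configs_def by auto

lemma configs_fin: "finite (configs C S)"
  unfolding configs_eq using blist_fin by auto

lemma configs_card: "card (configs C S) = 2 ^ C * 2 ^ S"
  unfolding configs_eq card_cartesian_product blist_card by simp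

lemma edges0_fun: "(v, w) \<in> edges0 M C S x \<Longrightarrow> (v, w') \<in> edges0 M C S x \<Longrightarrow> w = w'"
  unfolding edges0_def by auto

lemma edges0_sink: "halted S v \<Longrightarrow> (v, w) \<notin> edges0 M C S x"
  unfolding edges0_def by auto

lemma reach_sink:
  assumes "(a, w) \<in> (edges0 M C S x \<union> (edges0 M C S x)\<inverse>)\<^sup>*" and "halted S a"
  shows "(w, a) \<in> (edges0 M C S x)\<^sup>*"
  using assms(1)
proof (induction rule: rtrancl_induct)
  case base
  then show ?case by simp
next
  case (step u w)
  from step.hyps(2) show ?case
  proof
    assume e: "(u, w) \<in> edges0 M C S x"
    from step.IH show ?thesis
    proof (cases rule: converse_rtranclE)
      case base
      then show ?thesis using e edges0_sink[OF assms(2)] by auto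
    next
      case (step u')
      then have "u' = w" using edges0_fun e by blast
      then show ?thesis using step by simp
    qed
  next
    assume "(u, w) \<in> (edges0 M C S x)\<inverse>"
    then show ?thesis using step.IH by auto
  qed
qed

lemma sinks_eq:
  assumes "(w, a) \<in> (edges0 M C S x)\<^sup>*" "(w, b) \<in> (edges0 M C S x)\<^sup>*"
    "halted S a" "halted S b"
  shows "a = b"
  using assms(1,2)
proof (induction rule: converse_rtrancl_induct)
  case base
  then show ?case using edges0_sink[OF assms(3)] by (cases rule: converse_rtranclE) auto
next
  case (step y z)
  from step.prems show ?case
  proof (cases rule: converse_rtranclE)
    case base
    then show ?thesis using step.hyps(1) edges0_sink[OF assms(4)] by auto
  next
    case (step z')
    then have "z' = z" using edges0_fun \<open>(y, z) \<in> edges0 M C S x\<close> by blast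
    then show ?thesis using step(2) \<open>(z, a) \<in> (edges0 M C S x)\<^sup>*\<close> step.IH by auto
  qed
qed

lemma comp_sub:
  assumes closed: "\<And>v. v \<in> configs C S \<Longrightarrow> M x False v \<in> configs C S"
    and v: "v \<in> configs C S"
  shows "comp0 M C S x v \<subseteq> configs C S"
proof
  fix w assume "w \<in> comp0 M C S x v"
  then have "(v, w) \<in> (edges0 M C S x \<union> (edges0 M C S x)\<inverse>)\<^sup>*" unfolding comp0_def by simp
  then show "w \<in> configs C S"
  proof (induction rule: rtrancl_induct)
    case base then show ?case using v by simp
  next
    case (step u w)
    then show ?case using closed unfolding edges0_def by blast
  qed
qed

lemma main:
  fixes h :: "bool list \<Rightarrow> config"
  assumes closed: "\<And>v. v \<in> configs C S \<Longrightarrow> M x False v \<in> configs C S"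
    and hc: "\<And>\<tau>. length \<tau> = C \<Longrightarrow> h \<tau> \<in> configs C S"
    and hh: "\<And>\<tau>. length \<tau> = C \<Longrightarrow> halted S (h \<tau>)"
    and inj: "\<And>\<tau> \<tau>'. h \<tau> = h \<tau>' \<Longrightarrow> \<tau> = \<tau>'"
  shows "(\<Sum>\<tau>\<in>{\<tau>. length \<tau> = C}. real (card (comp0 M C S x (h \<tau>)))) / 2 ^ C \<le> 2 ^ S"
proof -
  let ?T = "{\<tau> :: bool list. length \<tau> = C}"
  have sub: "\<And>\<tau>. \<tau> \<in> ?T \<Longrightarrow> comp0 M C S x (h \<tau>) \<subseteq> configs C S"
    using comp_sub[of C S M x] closed hc by auto
  have fin: "\<And>\<tau>. \<tau> \<in> ?T \<Longrightarrow> finite (comp0 M C S x (h \<tau>))"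
    using sub configs_fin finite_subset by blast
  have disj: "\<forall>\<tau>\<in>?T. \<forall>\<tau>'\<in>?T. \<tau> \<noteq> \<tau>' \<longrightarrow> comp0 M C S x (h \<tau>) \<inter> comp0 M C S x (h \<tau>') = {}"
  proof (intro ballI impI)
    fix \<tau> \<tau>' assume t: "\<tau> \<in> ?T" "\<tau>' \<in> ?T" "\<tau> \<noteq> \<tau>'"
    show "comp0 M C S x (h \<tau>) \<inter> comp0 M C S x (h \<tau>') = {}"
    proof (rule ccontr)
      assume "comp0 M C S x (h \<tau>) \<inter> comp0 M C S x (h \<tau>') \<noteq> {}"
      then obtain w where w: "w \<in> comp0 M C S x (h \<tau>)" "w \<in> comp0 M C S x (h \<tau>')" by blast
      have h1: "halted S (h \<tau>)" "halted S (h \<tau>')" using hh t(1,2) by auto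
      have p1: "(h \<tau>, w) \<in> (edges0 M C S x \<union> (edges0 M C S x)\<inverse>)\<^sup>*"
        using w(1) unfolding comp0_def by simp
      have p2: "(h \<tau>', w) \<in> (edges0 M C S x \<union> (edges0 M C S x)\<inverse>)\<^sup>*"
        using w(2) unfolding comp0_def by simp
      have "h \<tau> = h \<tau>'"
        by (rule sinks_eq[OF reach_sink[OF p1 h1(1)] reach_sink[OF p2 h1(2)] h1])
      then show False using inj t(3) by blast
    qed
  qed
  have "(\<Sum>\<tau>\<in>?T. card (comp0 M C S x (h \<tau>))) = card (\<Union>\<tau>\<in>?T. comp0 M C S x (h \<tau>))"
    proof (rule card_UN_disjoint[symmetric])
    show "finite ?T" by (rule blist_fin)
    show "\<forall>i\<in>?T. finite (comp0 M C S x (h i))" using fin by blast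
    show "\<forall>i\<in>?T. \<forall>j\<in>?T. i \<noteq> j \<longrightarrow> comp0 M C S x (h i) \<inter> comp0 M C S x (h j) = {}" by (rule disj)
  qed
  also have "\<dots> \<le> card (configs C S)"
    by (rule card_mono[OF configs_fin]) (use sub in blast)
  also have "\<dots> = 2 ^ C * 2 ^ S" by (rule configs_card)
  finally have "(\<Sum>\<tau>\<in>?T. card (comp0 M C S x (h \<tau>))) \<le> 2 ^ C * 2 ^ S" .
  then have "real (\<Sum>\<tau>\<in>?T. card (comp0 M C S x (h \<tau>))) \<le> real (2 ^ C * 2 ^ S)"
    by (rule of_nat_mono)
  then have "(\<Sum>\<tau>\<in>?T. real (card (comp0 M C S x (h \<tau>)))) \<le> 2 ^ C * 2 ^ S"
    unfolding of_nat_sum by simp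
  then show ?thesis by (simp add: divide_le_eq mult.commute)
qed

theorem lemma4p7:
  fixes M :: machine and s c :: "nat \<Rightarrow> nat" and x :: "bool list"
  assumes valid: "valid_catalytic M s c"
    and s2: "\<And>n. 2 \<le> s n"
    and logs: "\<And>n. log 2 (real n) \<le> real (s n)"
    and sc: "\<And>n. s n \<le> c n"
    and cs: "\<And>n. c n \<le> 2 ^ s n"
  shows "(\<Sum>\<tau>\<in>{\<tau>. length \<tau> = c (length x)}.
            real (card (comp0 M (c (length x)) (s (length x)) x (acc_conf (s (length x)) \<tau>))))
           / 2 ^ c (length x) \<le> 2 ^ s (length x)
    \<and> (\<Sum>\<tau>\<in>{\<tau>. length \<tau> = c (length x)}.
            real (card (comp0 M (c (length x)) (s (length x)) x (rej_conf (s (length x)) \<tau>))))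
           / 2 ^ c (length x) \<le> 2 ^ s (length x)"
proof -
  have closed: "\<And>v. v \<in> configs (c (length x)) (s (length x)) \<Longrightarrow>
      M x False v \<in> configs (c (length x)) (s (length x))"
    using valid unfolding valid_catalytic_def by blast
  have l: "length (acc_work (s (length x))) = s (length x)"
          "length (rej_work (s (length x))) = s (length x)"
    using s2[of "length x"] unfolding acc_work_def rej_work_def by auto
  show ?thesis
  proof
    show "(\<Sum>\<tau>\<in>{\<tau>. length \<tau> = c (length x)}.
            real (card (comp0 M (c (length x)) (s (length x)) x (acc_conf (s (length x)) \<tau>))))
           / 2 ^ c (length x) \<le> 2 ^ s (length x)"
      by (rule main[where M=M and x=x]) (use closed in blast, auto simp: acc_conf_def configs_def halted_def l)
    show "(\<Sum>\<tau>\<in>{\<tau>. length \<tau> = c (length x)}.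
            real (card (comp0 M (c (length x)) (s (length x)) x (rej_conf (s (length x)) \<tau>))))
           / 2 ^ c (length x) \<le> 2 ^ s (length x)"
      by (rule main[where M=M and x=x]) (use closed in blast, auto simp: rej_conf_def configs_def halted_def l)
  qed
qed

end
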